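(* If $G$ is a clique-uniform graph with respect to a clique partition $F$, with clique partition graph $P_G$, then $\mathcal E(\mathcal R_F)=\mathcal E(P_G)$.
   Context: All graphs are finite and simple, $V(G)=\{1,\dots,n\}$. A clique partition of $G$ is a set $F=\{C_1,\dots,C_k\}$ of cliques such that every edge lies in exactly one $C_j$; $G$ is clique-uniform if all $|C_j|$ are equal. $\mathcal M_F$ is the $n\times k$ $(0,1)$-matrix with $(i,j)$-entry $1$ iff $i\in C_j$, and $\mathcal R_F=\mathcal M_F^T\mathcal M_F$. The clique partition graph $P_G$ has vertex set $\{1,\dots,k\}$ with $i\neq j$ adjacent iff $C_i\cap C_j\neq\emptyset$. With $s_i^F=|C_i|$, $\mathcal E(\mathcal R_F)=\sum_{i=1}^k|\lambda_i(\mathcal R_F)-\frac1k\sum_{j=1}^k s_j^F|$, and $\mathcal E(P_G)=\sum_{i=1}^k|\lambda_i(P_G)|$ is the sum of absolute values of adjacency eigenvalues. *)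

theory Defs
  imports "Jordan_Normal_Form.Char_Poly" "HOL-Computational_Algebra.Fundamental_Theorem_Algebra"
begin

definition simple_graph :: "nat \<Rightarrow> (nat \<Rightarrow> nat \<Rightarrow> bool) \<Rightarrow> bool" where
  "simple_graph n E \<longleftrightarrow> (\<forall>u v. E u v \<longrightarrow> E v u) \<and> (\<forall>u. \<not> E u u)
     \<and> (\<forall>u v. E u v \<longrightarrow> u \<in> {1..n} \<and> v \<in> {1..n})"

definition is_clique :: "nat \<Rightarrow> (nat \<Rightarrow> nat \<Rightarrow> bool) \<Rightarrow> nat set \<Rightarrow> bool" where
  "is_clique n E S \<longleftrightarrow> S \<noteq> {} \<and> S \<subseteq> {1..n} \<and> (\<forall>u\<in>S. \<forall>v\<in>S. u \<noteq> v \<longrightarrow> E u v)"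

definition clique_partition :: "nat \<Rightarrow> (nat \<Rightarrow> nat \<Rightarrow> bool) \<Rightarrow> nat \<Rightarrow> (nat \<Rightarrow> nat set) \<Rightarrow> bool" where
  "clique_partition n E k C \<longleftrightarrow> inj_on C {..<k} \<and> (\<forall>j<k. is_clique n E (C j))
     \<and> (\<forall>u v. E u v \<longrightarrow> (\<exists>!j. j < k \<and> u \<in> C j \<and> v \<in> C j))"

definition clique_uniform :: "nat \<Rightarrow> (nat \<Rightarrow> nat set) \<Rightarrow> bool" where
  "clique_uniform k C \<longleftrightarrow> (\<forall>i<k. \<forall>j<k. card (C i) = card (C j))"

(* incidence matrix M_F (n x k); row i corresponds to vertex i+1 *)
definition inc_mat :: "nat \<Rightarrow> nat \<Rightarrow> (nat \<Rightarrow> nat set) \<Rightarrow> real mat" where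
  "inc_mat n k C = mat n k (\<lambda>(i, j). if i + 1 \<in> C j then 1 else 0)"

definition R_mat :: "nat \<Rightarrow> nat \<Rightarrow> (nat \<Rightarrow> nat set) \<Rightarrow> real mat" where
  "R_mat n k C = transpose_mat (inc_mat n k C) * inc_mat n k C"

definition PG_adj :: "nat \<Rightarrow> (nat \<Rightarrow> nat set) \<Rightarrow> real mat" where
  "PG_adj k C = mat k k (\<lambda>(i, j). if i \<noteq> j \<and> C i \<inter> C j \<noteq> {} then 1 else 0)"

definition eigvals :: "real mat \<Rightarrow> complex multiset" where
  "eigvals A = proots (char_poly (map_mat complex_of_real A))"

definition shifted_energy :: "real mat \<Rightarrow> real \<Rightarrow> real" where
  "shifted_energy A c = (\<Sum>z\<in>#eigvals A. cmod (z - complex_of_real c))"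

definition energy :: "real mat \<Rightarrow> real" where
  "energy A = shifted_energy A 0"

definition R_energy :: "nat \<Rightarrow> nat \<Rightarrow> (nat \<Rightarrow> nat set) \<Rightarrow> real" where
  "R_energy n k C = shifted_energy (R_mat n k C) ((\<Sum>j<k. real (card (C j))) / real k)"

end

theory Submission
  imports Defs
begin

lemma proots_lin_prod: "proots (\<Prod>a\<leftarrow>as. [:- a, 1:]) = mset (as :: complex list)"
proof (induction as)
  case Nil then show ?case by simp
next
  case (Cons a as)
  have nz: "(\<Prod>a\<leftarrow>as. [:- a, 1:]) \<noteq> (0::complex poly)"
    by (auto simp: prod_list_zero_iff)
  have "proots (\<Prod>a\<leftarrow>(a#as). [:- a, 1:]) = proots [:-a,1:] + proots (\<Prod>a\<leftarrow>as. [:- a, 1:])"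
  proof -
    have "(\<Prod>a\<leftarrow>(a#as). [:- a, 1:]) = [:-a,1:] * (\<Prod>a\<leftarrow>as. [:- a, 1:])" by simp
    then show ?thesis using nz by (simp only:) (rule proots_mult, auto)
  qed
  then show ?case using Cons by (simp add: add_mset_commute)
qed

lemma shift_energy:
  fixes A :: "real mat"
  assumes A: "A \<in> carrier_mat m m"
  shows "shifted_energy (A + c \<cdot>\<^sub>m 1\<^sub>m m) c = energy A"
proof -
  define B where "B = map_mat complex_of_real A"
  define c' where "c' = complex_of_real c"
  define B' where "B' = map_mat complex_of_real (A + c \<cdot>\<^sub>m 1\<^sub>m m)"
  have Bc: "B \<in> carrier_mat m m" using A by (simp add: B_def)
  have B'c: "B' \<in> carrier_mat m m" using A by (simp add: B'_def)
  have B'eq: "B' = B + c' \<cdot>\<^sub>m 1\<^sub>m m"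
    using A by (intro eq_matI) (auto simp: B'_def B_def c'_def)
  obtain as where as: "char_poly B' = (\<Prod>a\<leftarrow>as. [:- a, 1:])"
    using char_poly_factorized[OF B'c] by blast
  have "poly (char_poly B) x = poly (\<Prod>a\<leftarrow>map (\<lambda>a. a - c') as. [:- a, 1:]) x" for x
  proof -
    have cm: "char_matrix B x = char_matrix B' (x + c')"
      unfolding char_matrix_def B'eq using Bc
      by (intro eq_matI) (auto simp: algebra_simps)
    have "poly (char_poly B) x = poly (char_poly B') (x + c')"
      using char_poly_matrix[OF Bc] char_poly_matrix[OF B'c] cm by simp
    also have "\<dots> = (\<Prod>a\<leftarrow>as. (x + c') - a)"
      unfolding as poly_prod_list by (simp add: o_def)
    also have "\<dots> = poly (\<Prod>a\<leftarrow>map (\<lambda>a. a - c') as. [:- a, 1:]) x"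
      unfolding poly_prod_list by (simp add: o_def algebra_simps)
    finally show ?thesis .
  qed
  then have cB: "char_poly B = (\<Prod>a\<leftarrow>map (\<lambda>a. a - c') as. [:- a, 1:])"
    using poly_eq_poly_eq_iff by blast
  have e1: "eigvals (A + c \<cdot>\<^sub>m 1\<^sub>m m) = mset as"
    unfolding eigvals_def B'_def[symmetric] as proots_lin_prod ..
  have e2: "eigvals A = mset (map (\<lambda>a. a - c') as)"
    unfolding eigvals_def B_def[symmetric] cB proots_lin_prod ..
  show ?thesis
    unfolding energy_def shifted_energy_def e1 e2 c'_def
    by (simp add: multiset.map_comp o_def)
qed

lemma card_shift: assumes "S \<subseteq> {1..n}" shows "card {l. l < n \<and> Suc l \<in> S} = card S"
proof -
  have "S = Suc ` {l. l < n \<and> Suc l \<in> S}"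
  proof
    show "S \<subseteq> Suc ` {l. l < n \<and> Suc l \<in> S}"
    proof
      fix x assume x: "x \<in> S"
      then have "1 \<le> x" "x \<le> n" using assms by auto
      then have "x = Suc (x - 1)" "x - 1 < n" by auto
      then show "x \<in> Suc ` {l. l < n \<and> Suc l \<in> S}" using x by (metis (mono_tags) image_eqI mem_Collect_eq)
    qed
  qed auto
  then show ?thesis by (metis card_image inj_Suc inj_on_subset subset_UNIV)
qed
lemma R_eq:
  assumes sg: "simple_graph n E" and cp: "clique_partition n E k C" and cu: "clique_uniform k C"
    and k: "0 < k"
  shows "R_mat n k C = PG_adj k C + real (card (C 0)) \<cdot>\<^sub>m 1\<^sub>m k"
proof (rule eq_matI)
  show "dim_row (R_mat n k C) = dim_row (PG_adj k C + real (card (C 0)) \<cdot>\<^sub>m 1\<^sub>m k)"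
    by (simp add: R_mat_def PG_adj_def inc_mat_def)
  show "dim_col (R_mat n k C) = dim_col (PG_adj k C + real (card (C 0)) \<cdot>\<^sub>m 1\<^sub>m k)"
    by (simp add: R_mat_def PG_adj_def inc_mat_def)
  fix i j assume i: "i < dim_row (PG_adj k C + real (card (C 0)) \<cdot>\<^sub>m 1\<^sub>m k)"
    and j: "j < dim_col (PG_adj k C + real (card (C 0)) \<cdot>\<^sub>m 1\<^sub>m k)"
  then have i: "i < k" and j: "j < k" by (auto simp: PG_adj_def)
  have cl: "\<And>j. j < k \<Longrightarrow> C j \<subseteq> {1..n} \<and> (\<forall>u\<in>C j. \<forall>v\<in>C j. u \<noteq> v \<longrightarrow> E u v)"
    using cp by (simp add: clique_partition_def is_clique_def)
  have uq: "\<And>u v. E u v \<Longrightarrow> \<exists>!l. l < k \<and> u \<in> C l \<and> v \<in> C l"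
    using cp by (simp add: clique_partition_def)
  have sub: "C i \<inter> C j \<subseteq> {1..n}" using cl[OF i] by blast
  have "R_mat n k C $$ (i, j) = (\<Sum>l<n. (if Suc l \<in> C i \<inter> C j then 1 else 0))"
    using i j unfolding R_mat_def inc_mat_def
    by (simp add: scalar_prod_def lessThan_atLeast0) (intro sum.cong, auto)
  also have "\<dots> = real (card {l. l < n \<and> Suc l \<in> C i \<inter> C j})"
    by (simp add: sum.If_cases lessThan_def Collect_conj_eq Int_commute)
  also have "\<dots> = real (card (C i \<inter> C j))" using card_shift[OF sub] by simp
  finally have R: "R_mat n k C $$ (i, j) = real (card (C i \<inter> C j))" .
  show "R_mat n k C $$ (i, j) = (PG_adj k C + real (card (C 0)) \<cdot>\<^sub>m 1\<^sub>m k) $$ (i, j)"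
  proof (cases "i = j")
    case True
    have "card (C j) = card (C 0)" using cu j k unfolding clique_uniform_def by blast
    then show ?thesis using R i True by (simp add: PG_adj_def)
  next
    case False
    have fin: "finite (C i \<inter> C j)" using sub finite_subset by blast
    have le: "card (C i \<inter> C j) \<le> Suc 0"
    proof (subst card_le_Suc0_iff_eq[OF fin], intro ballI, rule ccontr)
      fix u v assume u: "u \<in> C i \<inter> C j" and v: "v \<in> C i \<inter> C j" and uv: "u \<noteq> v"
      have "E u v" using cl[OF i] u v uv by blast
      from uq[OF this] have "\<And>l1 l2. l1 < k \<Longrightarrow> u \<in> C l1 \<Longrightarrow> v \<in> C l1 \<Longrightarrow> l2 < k \<Longrightarrow> u \<in> C l2 \<Longrightarrow> v \<in> C l2 \<Longrightarrow> l1 = l2"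
        by (metis (no_types, lifting))
      then show False using u v i j False by blast
    qed
    have "card (C i \<inter> C j) = (if C i \<inter> C j \<noteq> {} then 1 else 0)"
      using le fin by (auto simp: le_Suc_eq card_0_eq)
    then show ?thesis using R i j False by (simp add: PG_adj_def)
  qed
qed

theorem mainTheorem10:
  fixes n k :: nat and E :: "nat \<Rightarrow> nat \<Rightarrow> bool" and C :: "nat \<Rightarrow> nat set"
  assumes "simple_graph n E"
    and "clique_partition n E k C"
    and "clique_uniform k C"
  shows "R_energy n k C = energy (PG_adj k C)"
proof (cases "k = 0")
  case True
  have Ac: "PG_adj k C \<in> carrier_mat k k" by (simp add: PG_adj_def)
  have "R_mat n k C = PG_adj k C + ((\<Sum>j<k. real (card (C j))) / real k) \<cdot>\<^sub>m 1\<^sub>m k"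
    using True by (intro eq_matI) (auto simp: R_mat_def inc_mat_def PG_adj_def)
  then show ?thesis
    unfolding R_energy_def using shift_energy[OF Ac] by simp
next
  case False
  then have k: "0 < k" by simp
  have avg: "(\<Sum>j<k. real (card (C j))) / real k = real (card (C 0))"
  proof -
    have "(\<Sum>j<k. real (card (C j))) = (\<Sum>j<k. real (card (C 0)))"
    proof (rule sum.cong[OF refl])
      fix j assume "j \<in> {..<k}"
      then have "card (C j) = card (C 0)" using assms(3) k unfolding clique_uniform_def by blast
      then show "real (card (C j)) = real (card (C 0))" by (rule arg_cong)
    qed
    then show ?thesis using k by simp
  qed
  have Ac: "PG_adj k C \<in> carrier_mat k k" by (simp add: PG_adj_def)
  show ?thesis
    unfolding R_energy_def avg R_eq[OF assms k] using shift_energy[OF Ac] .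
qed

end
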